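(* Let $\kappa$ be a regular uncountable cardinal and let $\rho_2$ be obtained by walking along a $C$-sequence $\vec C$ over $\kappa$. Then for every infinite cardinal $\theta<\chi(\vec C)$, the tree $(T(\rho_2),\subseteq)$ admits no $\theta$-ascending path.
   Context: A $C$-sequence over $\kappa$ is $\vec C=\langle C_\delta\mid\delta<\kappa\rangle$, each $C_\delta$ closed in $\delta$ with $\sup(C_\delta)=\sup(\delta)$. $\chi(\vec C)$ is the least cardinal $\chi\le\kappa$ for which there is a cofinal $\Gamma\subseteq\kappa$ such that for every $\epsilon<\kappa$ there is $\Delta\in[\kappa]^\chi$ with $\Gamma\cap\epsilon\subseteq\bigcup_{\delta\in\Delta}C_\delta$. Walks: $\mathrm{Tr}(\beta,\gamma)(0)=\gamma$, $\mathrm{Tr}(\beta,\gamma)(n)=\min(C_{\mathrm{Tr}(\beta,\gamma)(n-1)}\setminus\beta)$ if $\mathrm{Tr}(\beta,\gamma)(n-1)>\beta$, else $\beta$; $\rho_2(\beta,\gamma)$ is the least $l$ with $\mathrm{Tr}(\beta,\gamma)(l)=\beta$. $T(\rho_2)=\{\rho_{2\delta}\restriction\gamma\mid\gamma\le\delta<\kappa\}$ under $\subseteq$, with $\rho_{2\delta}(\xi)=\rho_2(\xi,\delta)$; its $\gamma$-th level $T_\gamma$ consists of the elements with domain $\gamma$. For an infinite cardinal $\theta$, a $\theta$-ascending path through a tree $(T,<_T)$ of height $\kappa$ is a sequence $\langle f_\gamma\mid\gamma<\kappa\rangle$ with $f_\gamma:\theta\to T_\gamma$ and such that for all $\gamma<\delta<\kappa$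 there are $i,j<\theta$ with $f_\gamma(i)<_Tf_\delta(j)$. *)

theory Defs
  imports Main "HOL-Library.Countable_Set"
begin

unbundle cardinal_syntax

text \<open>The cardinal kappa is represented by a type 'a of class wellorder whose
order type is kappa (i.e. the ordinals below kappa are the elements of 'a).\<close>

definition ord_rel :: "('a::wellorder) rel" where
  "ord_rel = {(x, y). x \<le> y}"

definition regular_uncountable :: "'a::wellorder itself \<Rightarrow> bool" where
  "regular_uncountable _ \<longleftrightarrow>
     Card_order (ord_rel :: 'a rel) \<and> regularCard (ord_rel :: 'a rel) \<and>
     \<not> countable (UNIV :: 'a set)"

definition ord_sup :: "('a::wellorder) set \<Rightarrow> 'a" where
  "ord_sup X = (LEAST u. \<forall>x\<in>X. x \<le> u)"

definition closed_in_ord :: "('a::wellorder) set \<Rightarrow> 'a \<Rightarrow> bool" where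
  "closed_in_ord C \<delta> \<longleftrightarrow>
     (\<forall>\<gamma><\<delta>. C \<inter> {..<\<gamma>} \<noteq> {} \<and> ord_sup (C \<inter> {..<\<gamma>}) = \<gamma> \<longrightarrow> \<gamma> \<in> C)"

definition C_sequence :: "('a::wellorder \<Rightarrow> 'a set) \<Rightarrow> bool" where
  "C_sequence C \<longleftrightarrow>
     (\<forall>\<delta>. C \<delta> \<subseteq> {..<\<delta>} \<and> closed_in_ord (C \<delta>) \<delta> \<and> ord_sup (C \<delta>) = ord_sup {..<\<delta>})"

fun Tr :: "('a::wellorder \<Rightarrow> 'a set) \<Rightarrow> 'a \<Rightarrow> 'a \<Rightarrow> nat \<Rightarrow> 'a" where
  "Tr C \<beta> \<gamma> 0 = \<gamma>"
| "Tr C \<beta> \<gamma> (Suc n) =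
     (if \<beta> < Tr C \<beta> \<gamma> n then (LEAST x. x \<in> C (Tr C \<beta> \<gamma> n) \<and> \<beta> \<le> x) else \<beta>)"

definition rho2 :: "('a::wellorder \<Rightarrow> 'a set) \<Rightarrow> 'a \<Rightarrow> 'a \<Rightarrow> nat" where
  "rho2 C \<beta> \<gamma> = (LEAST l. Tr C \<beta> \<gamma> l = \<beta>)"

definition rho2_restr :: "('a::wellorder \<Rightarrow> 'a set) \<Rightarrow> 'a \<Rightarrow> 'a \<Rightarrow> ('a \<Rightarrow> nat option)" where
  "rho2_restr C \<delta> \<gamma> = (\<lambda>\<xi>. if \<xi> < \<gamma> then Some (rho2 C \<xi> \<delta>) else None)"

definition T_level :: "('a::wellorder \<Rightarrow> 'a set) \<Rightarrow> 'a \<Rightarrow> ('a \<Rightarrow> nat option) set" where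
  "T_level C \<gamma> = {rho2_restr C \<delta> \<gamma> | \<delta>. \<gamma> \<le> \<delta>}"

text \<open>A theta-ascending path through (T(rho_2), subset), theta given as the
cardinality of the index set Theta; the tree order is inclusion of graphs.\<close>
definition ascending_path ::
  "('a::wellorder \<Rightarrow> 'a set) \<Rightarrow> 'b set \<Rightarrow> ('a \<Rightarrow> 'b \<Rightarrow> ('a \<Rightarrow> nat option)) \<Rightarrow> bool" where
  "ascending_path C \<Theta> f \<longleftrightarrow>
     (\<forall>\<gamma>. \<forall>i\<in>\<Theta>. f \<gamma> i \<in> T_level C \<gamma>) \<and>
     (\<forall>\<gamma> \<delta>. \<gamma> < \<delta> \<longrightarrow> (\<exists>i\<in>\<Theta>. \<exists>j\<in>\<Theta>. f \<gamma> i \<subseteq>\<^sub>m f \<delta> j))"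

text \<open>The cardinal |B| has the property whose least instance defines chi(C).\<close>
definition chi_property :: "('a::wellorder \<Rightarrow> 'a set) \<Rightarrow> 'c set \<Rightarrow> bool" where
  "chi_property C B \<longleftrightarrow>
     (\<exists>\<Gamma>::'a set. (\<forall>a. \<exists>g\<in>\<Gamma>. a \<le> g) \<and>
        (\<forall>\<epsilon>. \<exists>\<Delta>::'a set. |\<Delta>| =o |B| \<and> \<Gamma> \<inter> {..<\<epsilon>} \<subseteq> (\<Union>\<delta>\<in>\<Delta>. C \<delta>)))"

text \<open>theta < chi(C): no cardinal mu \<le> theta has the chi-property (chi(C) is the least
cardinal \<le> kappa with the property).\<close>
definition less_chi :: "'b set \<Rightarrow> ('a::wellorder \<Rightarrow> 'a set) \<Rightarrow> bool" where
  "less_chi \<Theta> C \<longleftrightarrow>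
     (\<forall>B::'a set. |B| \<le>o |\<Theta>| \<longrightarrow> \<not> chi_property C B)"

end

theory Submission
  imports Defs
begin


lemma Field_ord_rel[simp]: "Field (ord_rel::'a::wellorder rel) = UNIV"
  unfolding ord_rel_def Field_def by auto

lemma underS_ord_rel: "underS (ord_rel::'a::wellorder rel) a = {..<a}"
  unfolding ord_rel_def underS_def by auto

lemma under_ord_rel: "under (ord_rel::'a::wellorder rel) a = {..a}"
  unfolding ord_rel_def under_def by auto

lemma ru_card: "regular_uncountable TYPE('a::wellorder) \<Longrightarrow> Card_order (ord_rel::'a rel)"
  unfolding regular_uncountable_def by blast

lemma ru_reg: "regular_uncountable TYPE('a::wellorder) \<Longrightarrow> regularCard (ord_rel::'a rel)"
  unfolding regular_uncountable_def by blast

lemma ru_unc: "regular_uncountable TYPE('a::wellorder) \<Longrightarrow> \<not> countable (UNIV::'a set)"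
  unfolding regular_uncountable_def by blast

lemma ru_iso: "regular_uncountable TYPE('a::wellorder) \<Longrightarrow> |UNIV::'a set| =o (ord_rel::'a rel)"
  using card_of_Field_ordIso[OF ru_card] by simp

lemma ru_no_max:
  assumes "regular_uncountable TYPE('a::wellorder)"
  shows "\<exists>b. (a::'a) < b"
proof (rule ccontr)
  assume "\<not> (\<exists>b. a < b)"
  hence "Field (ord_rel::'a rel) = under ord_rel a"
    by (auto simp: under_ord_rel not_less)
  moreover have "\<not> finite (Field (ord_rel::'a rel))"
    using ru_unc[OF assms] by (auto dest: countable_finite)
  ultimately show False
    using Card_order_infinite_not_under[OF ru_card[OF assms]] by blast
qed

lemma bounded_if_small:
  assumes R: "regular_uncountable TYPE('a::wellorder)"
    and S: "|S::'a set| <o |UNIV::'a set|"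
  shows "\<exists>w. \<forall>s\<in>S. s < w"
proof (rule ccontr)
  assume H: "\<not> (\<exists>w. \<forall>s\<in>S. s < w)"
  have "cofinal S (ord_rel::'a rel)"
    unfolding cofinal_def
  proof
    fix a :: 'a
    obtain b where "a < b" using ru_no_max[OF R] by blast
    then obtain s where "s \<in> S" "b \<le> s" using H by (auto simp: not_less)
    thus "\<exists>s\<in>S. a \<noteq> s \<and> (a, s) \<in> ord_rel"
      using \<open>a < b\<close> less_le_trans[of a b s] by (intro bexI[of _ s]) (auto simp: ord_rel_def)
  qed
  hence "|S| =o (ord_rel::'a rel)"
    using ru_reg[OF R] unfolding regularCard_def by auto
  hence "|S| =o |UNIV::'a set|"
    using ru_iso[OF R] ordIso_symmetric ordIso_transitive by blast
  thus False using S not_ordLess_ordIso by blast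
qed

lemma small_underS:
  assumes R: "regular_uncountable TYPE('a::wellorder)"
  shows "|{..<(a::'a)}| <o |UNIV::'a set|"
proof -
  have "|underS (ord_rel::'a rel) a| <o (ord_rel::'a rel)"
    using card_of_underS[OF ru_card[OF R], of a] by simp
  thus ?thesis
    using ru_iso[OF R] ordIso_symmetric ordLess_ordIso_trans underS_ord_rel by metis
qed

lemma small_countable:
  assumes R: "regular_uncountable TYPE('a::wellorder)" and "countable (S::'a set)"
  shows "|S| <o |UNIV::'a set|"
proof -
  have 1: "|S| \<le>o |UNIV::nat set|"
    using assms(2) unfolding countable_def card_of_ordLeq[symmetric] by blast
  have "|UNIV::nat set| <o |UNIV::'a set|"
    using ru_unc[OF R] unfolding card_of_ordLess[symmetric] countable_def by blast
  thus ?thesis using 1 ordLeq_ordLess_trans by blast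
qed

lemma small_times:
  assumes R: "regular_uncountable TYPE('a::wellorder)" and S: "|S| <o |UNIV::'a set|"
  shows "|S \<times> S| <o |UNIV::'a set|"
proof (cases "finite S")
  case True
  hence "countable (S \<times> S)" by (simp add: countable_finite)
  then obtain f :: "_ \<Rightarrow> nat" where "inj_on f (S \<times> S)" unfolding countable_def by blast
  hence 1: "|S \<times> S| \<le>o |UNIV::nat set|" using card_of_ordLeq[symmetric] by blast
  have "|UNIV::nat set| <o |UNIV::'a set|"
    using ru_unc[OF R] unfolding card_of_ordLess[symmetric] countable_def by blast
  thus ?thesis using 1 ordLeq_ordLess_trans by blast
next
  case False
  thus ?thesis using card_of_Times_same_infinite ordIso_ordLess_trans S by blast
qed



definition bt :: "'a::wellorder" where "bt = (LEAST x. True)"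

lemma bt_le[simp]: "bt \<le> (x::'a::wellorder)"
  unfolding bt_def by (rule Least_le) simp

definition nxt :: "('a::wellorder \<Rightarrow> 'a set) \<Rightarrow> 'a \<Rightarrow> 'a \<Rightarrow> 'a" where
  "nxt C x y = (LEAST z. z \<in> C y \<and> x \<le> z)"

lemma ord_sup_le: "(\<forall>x\<in>X. x \<le> v) \<Longrightarrow> ord_sup X \<le> v"
  unfolding ord_sup_def by (rule Least_le) simp

lemma ord_sup_upper: "(\<forall>x\<in>X. x \<le> v) \<Longrightarrow> x \<in> X \<Longrightarrow> x \<le> ord_sup X"
proof -
  assume a: "\<forall>x\<in>X. x \<le> v" and x: "x \<in> X"
  have "\<forall>x\<in>X. x \<le> (LEAST u. \<forall>x\<in>X. x \<le> u)" by (rule LeastI[of _ v]) (rule a)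
  thus ?thesis using x unfolding ord_sup_def by blast
qed

lemma ord_sup_eq: "(\<forall>x\<in>X. x \<le> u) \<Longrightarrow> (\<forall>v. (\<forall>x\<in>X. x \<le> v) \<longrightarrow> u \<le> v) \<Longrightarrow> ord_sup X = u"
  unfolding ord_sup_def by (rule Least_equality) blast+

lemma ord_sup_empty: "ord_sup {} = bt"
  unfolding ord_sup_def bt_def by simp

lemma Cseq_sub: "C_sequence C \<Longrightarrow> C y \<subseteq> {..<y}"
  unfolding C_sequence_def by blast

lemma Cseq_closed: "C_sequence C \<Longrightarrow> closed_in_ord (C y) y"
  unfolding C_sequence_def by blast

lemma Cseq_sup: "C_sequence C \<Longrightarrow> ord_sup (C y) = ord_sup {..<y}"
  unfolding C_sequence_def by blast

lemma nxt_ex: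
  assumes CS: "C_sequence C" and "bt < x" "x < y"
  shows "\<exists>z. z \<in> C y \<and> x \<le> z"
proof (rule ccontr)
  assume H: "\<not> (\<exists>z. z \<in> C y \<and> x \<le> z)"
  hence lt: "\<forall>z\<in>C y. z < x" by (auto simp: not_le)
  have 1: "ord_sup (C y) \<le> x" using lt by (intro ord_sup_le) auto
  have 2: "x \<le> ord_sup {..<y}" using \<open>x < y\<close> by (intro ord_sup_upper[of _ y]) auto
  have eq: "ord_sup (C y) = x" using 1 2 Cseq_sup[OF CS, of y] by simp
  show False
  proof (cases "C y = {}")
    case True
    thus False using eq ord_sup_empty \<open>bt < x\<close> by (metis less_irrefl)
  next
    case False
    have "C y \<inter> {..<x} = C y" using lt by auto
    hence "x \<in> C y" using Cseq_closed[OF CS, of y] False eq \<open>x < y\<close>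
      unfolding closed_in_ord_def by auto
    thus False using lt by auto
  qed
qed

lemma nxt_props:
  assumes CS: "C_sequence C" and "bt < x" "x < y"
  shows "nxt C x y \<in> C y \<and> x \<le> nxt C x y \<and> nxt C x y < y"
proof -
  obtain z where "z \<in> C y \<and> x \<le> z" using nxt_ex[OF assms] by blast
  hence "nxt C x y \<in> C y \<and> x \<le> nxt C x y" unfolding nxt_def by (rule LeastI)
  thus ?thesis using Cseq_sub[OF CS, of y] by auto
qed

lemma nxt_le: "z \<in> C y \<Longrightarrow> x \<le> z \<Longrightarrow> nxt C x y \<le> z"
  unfolding nxt_def by (rule Least_le) simp

lemma nxt_self: "x \<in> C y \<Longrightarrow> bt < x \<Longrightarrow> x < y \<Longrightarrow> C_sequence C \<Longrightarrow> nxt C x y = x"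
  using nxt_le[of x C y x] nxt_props[of C x y] by auto

lemma Tr_shift: "x < y \<Longrightarrow> Tr C x y (Suc n) = Tr C x (nxt C x y) n"
proof (induction n)
  case 0
  then show ?case by (simp add: nxt_def)
next
  case (Suc n)
  have "Tr C x y (Suc (Suc n)) = (if x < Tr C x y (Suc n) then (LEAST z. z \<in> C (Tr C x y (Suc n)) \<and> x \<le> z) else x)"
    by (rule Tr.simps(2))
  also have "\<dots> = (if x < Tr C x (nxt C x y) n then (LEAST z. z \<in> C (Tr C x (nxt C x y) n) \<and> x \<le> z) else x)"
    using Suc by simp
  also have "\<dots> = Tr C x (nxt C x y) (Suc n)"
    by (rule Tr.simps(2)[symmetric])
  finally show ?case .
qed

lemma Tr_self: "Tr C x x n = x"
  by (induction n) auto

lemma Tr_term: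
  assumes CS: "C_sequence C" and "bt < x"
  shows "x \<le> y \<Longrightarrow> \<exists>l. Tr C x y l = x"
proof (induction y rule: less_induct)
  case (less y)
  show ?case
  proof (cases "x = y")
    case True
    thus ?thesis by (intro exI[of _ 0]) simp
  next
    case False
    hence xy: "x < y" using less.prems by simp
    have n: "nxt C x y < y" "x \<le> nxt C x y" using nxt_props[OF CS \<open>bt < x\<close> xy] by auto
    then obtain l where "Tr C x (nxt C x y) l = x" using less.IH by blast
    thus ?thesis using Tr_shift[OF xy, of C l] by metis
  qed
qed

lemma rho2_self[simp]: "rho2 C x x = 0"
  unfolding rho2_def by simp

lemma rho2_step:
  assumes CS: "C_sequence C" and "bt < x" "x < y"
  shows "rho2 C x y = Suc (rho2 C x (nxt C x y))"
proof -
  have n: "nxt C x y < y" "x \<le> nxt C x y" using nxt_props[OF assms] by auto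
  obtain l where l: "Tr C x (nxt C x y) l = x" using Tr_term[OF CS \<open>bt < x\<close> n(2)] by blast
  show ?thesis unfolding rho2_def
    by (rule Least_Suc2[where n = "Suc l" and m = l]) (use l Tr_shift[OF \<open>x < y\<close>, of C] \<open>x < y\<close> in auto)
qed

lemma rho2_zero_iff:
  assumes CS: "C_sequence C" and "bt < x" "x \<le> y"
  shows "rho2 C x y = 0 \<longleftrightarrow> x = y"
  using rho2_step[OF CS \<open>bt < x\<close>] assms(3) by (cases "x = y") auto



definition limit_pt :: "'a::wellorder \<Rightarrow> bool" where
  "limit_pt \<gamma> \<longleftrightarrow> bt < \<gamma> \<and> (\<forall>z<\<gamma>. \<exists>w. z < w \<and> w < \<gamma>)"

definition unbdd_in :: "'a::wellorder set \<Rightarrow> 'a \<Rightarrow> bool" where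
  "unbdd_in T \<gamma> \<longleftrightarrow> (\<forall>a<\<gamma>. \<exists>t\<in>T. a \<le> t \<and> t < \<gamma>)"

lemma ord_sup_lim:
  assumes "limit_pt \<gamma>" shows "ord_sup {..<\<gamma>} = \<gamma>"
proof (rule ord_sup_eq)
  show "\<forall>x\<in>{..<\<gamma>}. x \<le> \<gamma>" by auto
  show "\<forall>v. (\<forall>x\<in>{..<\<gamma>}. x \<le> v) \<longrightarrow> \<gamma> \<le> v"
  proof (intro allI impI)
    fix v assume H: "\<forall>x\<in>{..<\<gamma>}. x \<le> v"
    show "\<gamma> \<le> v"
    proof (rule ccontr)
      assume "\<not> \<gamma> \<le> v"
      hence "v < \<gamma>" by simp
      then obtain w where "v < w" "w < \<gamma>" using assms unfolding limit_pt_def by blast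
      thus False using H by (meson lessThan_iff not_le)
    qed
  qed
qed

lemma C_unbdd_lim:
  assumes CS: "C_sequence C" and L: "limit_pt \<gamma>"
  shows "unbdd_in (C \<gamma>) \<gamma>"
  unfolding unbdd_in_def
proof (intro allI impI)
  fix a assume "a < \<gamma>"
  show "\<exists>t\<in>C \<gamma>. a \<le> t \<and> t < \<gamma>"
  proof (rule ccontr)
    assume H: "\<not> (\<exists>t\<in>C \<gamma>. a \<le> t \<and> t < \<gamma>)"
    have "\<forall>t\<in>C \<gamma>. t \<le> a" using H Cseq_sub[OF CS, of \<gamma>] by (auto simp: not_le)
    hence "ord_sup (C \<gamma>) \<le> a" by (rule ord_sup_le)
    thus False using Cseq_sup[OF CS, of \<gamma>] ord_sup_lim[OF L] \<open>a < \<gamma>\<close> by simp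
  qed
qed

definition SF where
  "SF C \<gamma> \<delta> b c q \<longleftrightarrow> bt < b \<and> b < \<gamma> \<and> \<gamma> \<le> q \<and> unbdd_in (C q) \<gamma> \<and>
     (\<forall>x. b \<le> x \<and> x < \<gamma> \<longrightarrow> c \<le> rho2 C x \<delta> \<and> (rho2 C x \<delta> = c \<longleftrightarrow> x \<in> C q))"

lemma simple_form0:
  assumes CS: "C_sequence C" and L: "limit_pt \<gamma>"
  shows "\<gamma> \<le> \<delta> \<Longrightarrow> \<exists>b c q. bt < b \<and> b < \<gamma> \<and> \<gamma> \<le> q \<and> unbdd_in (C q) \<gamma> \<and>
            (\<forall>x. b \<le> x \<and> x < \<gamma> \<longrightarrow> rho2 C x \<delta> = c + rho2 C x (nxt C x q))"
proof (induction \<delta> rule: less_induct)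
  case (less \<delta>)
  obtain b0 where b0: "bt < b0" "b0 < \<gamma>" using L unfolding limit_pt_def by blast
  show ?case
  proof (cases "\<delta> = \<gamma> \<or> unbdd_in (C \<delta>) \<gamma>")
    case True
    hence U: "unbdd_in (C \<delta>) \<gamma>" using C_unbdd_lim[OF CS L] by auto
    show ?thesis
    proof (intro exI conjI allI impI)
      show "bt < b0" "b0 < \<gamma>" "\<gamma> \<le> \<delta>" "unbdd_in (C \<delta>) \<gamma>" using b0 less.prems U by auto
      fix x assume "b0 \<le> x \<and> x < \<gamma>"
      hence "bt < x" "x < \<delta>" using b0 less.prems by auto
      thus "rho2 C x \<delta> = 1 + rho2 C x (nxt C x \<delta>)" using rho2_step[OF CS] by simp
    qed
  next
    case False
    hence gd: "\<gamma> < \<delta>" using less.prems by auto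
    from False obtain a where a: "a < \<gamma>" "\<forall>t\<in>C \<delta>. \<not> (a \<le> t \<and> t < \<gamma>)"
      unfolding unbdd_in_def by blast
    have btg: "bt < \<gamma>" using L unfolding limit_pt_def by blast
    define n where "n = nxt C \<gamma> \<delta>"
    have n: "n \<in> C \<delta>" "\<gamma> \<le> n" "n < \<delta>" using nxt_props[OF CS btg gd] unfolding n_def by auto
    obtain b' c' q' where IH: "bt < b'" "b' < \<gamma>" "\<gamma> \<le> q'" "unbdd_in (C q') \<gamma>"
      "\<forall>x. b' \<le> x \<and> x < \<gamma> \<longrightarrow> rho2 C x n = c' + rho2 C x (nxt C x q')"
      using less.IH[OF n(3) n(2)] by blast
    show ?thesis
    proof (intro exI conjI allI impI)
      show "bt < max a b'" "max a b' < \<gamma>" "\<gamma> \<le> q'" "unbdd_in (C q') \<gamma>" using IH a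
        by (auto simp: less_max_iff_disj)
      fix x assume x: "max a b' \<le> x \<and> x < \<gamma>"
      hence btx: "bt < x" using IH by auto
      have xd: "x < \<delta>" using x gd by auto
      have nx: "nxt C x \<delta> \<in> C \<delta>" "x \<le> nxt C x \<delta>" using nxt_props[OF CS btx xd] by auto
      have "\<gamma> \<le> nxt C x \<delta>"
      proof (rule ccontr)
        assume "\<not> \<gamma> \<le> nxt C x \<delta>"
        thus False using a(2) nx x by (meson le_less_trans linorder_not_le max.boundedE order.trans)
      qed
      hence "n \<le> nxt C x \<delta>" unfolding n_def using nx(1) by (rule nxt_le[rotated])
      moreover have "nxt C x \<delta> \<le> n" using n x by (intro nxt_le) auto
      ultimately have eq: "nxt C x \<delta> = n" by simp
      have "rho2 C x \<delta> = Suc (rho2 C x n)" using rho2_step[OF CS btx xd] eq by simp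
      also have "\<dots> = Suc c' + rho2 C x (nxt C x q')" using IH(5) x by auto
      finally show "rho2 C x \<delta> = Suc c' + rho2 C x (nxt C x q')" .
    qed
  qed
qed

lemma simple_form:
  assumes CS: "C_sequence C" and L: "limit_pt \<gamma>" and "\<gamma> \<le> \<delta>"
  shows "\<exists>b c q. SF C \<gamma> \<delta> b c q"
proof -
  obtain b c q where H: "bt < b" "b < \<gamma>" "\<gamma> \<le> q" "unbdd_in (C q) \<gamma>"
    "\<forall>x. b \<le> x \<and> x < \<gamma> \<longrightarrow> rho2 C x \<delta> = c + rho2 C x (nxt C x q)"
    using simple_form0[OF CS L assms(3)] by blast
  have "SF C \<gamma> \<delta> b c q" unfolding SF_def
  proof (intro conjI allI impI)
    show "bt < b" "b < \<gamma>" "\<gamma> \<le> q" "unbdd_in (C q) \<gamma>" using H by auto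
    fix x assume x: "b \<le> x \<and> x < \<gamma>"
    have btx: "bt < x" using x H by auto
    have xq: "x < q" using x H by auto
    obtain t where t: "t \<in> C q" "x \<le> t" "t < \<gamma>" using H(4) x unfolding unbdd_in_def by blast
    have nq: "nxt C x q \<in> C q" "x \<le> nxt C x q" using nxt_props[OF CS btx xq] by auto
    have r: "rho2 C x \<delta> = c + rho2 C x (nxt C x q)" using H(5) x by blast
    thus "c \<le> rho2 C x \<delta>" by simp
    have "rho2 C x (nxt C x q) = 0 \<longleftrightarrow> x = nxt C x q" using rho2_zero_iff[OF CS btx nq(2)] .
    moreover have "x = nxt C x q \<longleftrightarrow> x \<in> C q" using nq nxt_self[OF _ btx xq CS] by metis
    ultimately show "rho2 C x \<delta> = c \<longleftrightarrow> x \<in> C q" using r by simp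
  qed
  thus ?thesis by blast
qed



definition good :: "'b set \<Rightarrow> 'a::wellorder \<Rightarrow> bool" where
  "good \<Theta> \<gamma> \<longleftrightarrow> (\<forall>S. S \<subseteq> {..<\<gamma>} \<and> |S| \<le>o |\<Theta>| \<longrightarrow> (\<exists>w<\<gamma>. \<forall>s\<in>S. s < w))"

lemma good_bound:
  "good \<Theta> \<gamma> \<Longrightarrow> S \<subseteq> {..<\<gamma>} \<Longrightarrow> |S| \<le>o |\<Theta>| \<Longrightarrow> \<exists>w<\<gamma>. \<forall>s\<in>S. s < w"
  unfolding good_def by blast

lemma un_le:
  assumes "infinite \<Theta>" "|A| \<le>o |\<Theta>|" "|B| \<le>o |\<Theta>|"
  shows "|A \<union> B| \<le>o |\<Theta>|"
  using card_of_Un_ordLeq_infinite_Field[of "|\<Theta>|" A B] assms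
  by (simp add: Field_card_of card_of_Card_order card_of_card_order_on)

lemma single_le:
  assumes "infinite \<Theta>" shows "|{a}| \<le>o |\<Theta>|"
proof -
  obtain t where "t \<in> \<Theta>" using assms by (metis finite.emptyI ex_in_conv)
  thus ?thesis unfolding card_of_ordLeq[symmetric] by (intro exI[of _ "\<lambda>_. t"]) auto
qed

lemma insert_le:
  assumes "infinite \<Theta>" "|S| \<le>o |\<Theta>|" shows "|insert a S| \<le>o |\<Theta>|"
  using un_le[OF assms(1) single_le[OF assms(1)] assms(2)] by simp

lemma countable_le:
  assumes "infinite \<Theta>" "countable S" shows "|S| \<le>o |\<Theta>|"
proof -
  have 1: "|S| \<le>o |UNIV::nat set|"
    using assms(2) unfolding countable_def card_of_ordLeq[symmetric] by blast
  thus ?thesis using infinite_iff_card_of_nat assms(1) ordLeq_transitive by blast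
qed

lemma good_limit:
  assumes "infinite \<Theta>" "good \<Theta> \<gamma>" shows "limit_pt \<gamma>"
  unfolding limit_pt_def
proof (intro conjI allI impI)
  have "\<exists>w<\<gamma>. \<forall>s\<in>{}. s < w" using assms(2) unfolding good_def
    by (metis card_of_empty empty_subsetI)
  then obtain w where "w < \<gamma>" by blast
  thus "bt < \<gamma>" using bt_le[of w] by (meson le_less_trans)
  fix z assume "z < \<gamma>"
  hence "\<exists>w<\<gamma>. \<forall>s\<in>{z}. s < w" using assms(2) single_le[OF assms(1), of z] unfolding good_def
    by (metis empty_subsetI insert_subset lessThan_iff)
  thus "\<exists>w. z < w \<and> w < \<gamma>" by auto
qed

lemma club_inter:
  assumes CS: "C_sequence C" and inf: "infinite \<Theta>" and G: "good \<Theta> \<gamma>"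
    and Q: "\<forall>i\<in>\<Theta>. \<gamma> \<le> q i \<and> unbdd_in (C (q i)) \<gamma>" and a: "a < \<gamma>"
  shows "\<exists>x. a \<le> x \<and> x < \<gamma> \<and> (\<forall>i\<in>\<Theta>. x \<in> C (q i))"
proof -
  have W: "\<forall>y. \<exists>w. y < \<gamma> \<longrightarrow> (w < \<gamma> \<and> y < w \<and> (\<forall>i\<in>\<Theta>. \<exists>t\<in>C (q i). y \<le> t \<and> t < w))"
  proof
    fix y
    show "\<exists>w. y < \<gamma> \<longrightarrow> (w < \<gamma> \<and> y < w \<and> (\<forall>i\<in>\<Theta>. \<exists>t\<in>C (q i). y \<le> t \<and> t < w))"
    proof (cases "y < \<gamma>")
      case True
      have "\<forall>i. \<exists>t. i \<in> \<Theta> \<longrightarrow> t \<in> C (q i) \<and> y \<le> t \<and> t < \<gamma>"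
        using Q True unfolding unbdd_in_def by blast
      then obtain tf where tf: "\<forall>i. i \<in> \<Theta> \<longrightarrow> tf i \<in> C (q i) \<and> y \<le> tf i \<and> tf i < \<gamma>"
        by metis
      let ?S = "insert y (tf ` \<Theta>)"
      have "?S \<subseteq> {..<\<gamma>}" using tf True by auto
      moreover have "|?S| \<le>o |\<Theta>|" using insert_le[OF inf card_of_image] .
      ultimately obtain w where "w < \<gamma>" "\<forall>s\<in>?S. s < w" using good_bound[OF G] by blast
      thus ?thesis using tf by (intro exI[of _ w]) auto
    qed simp
  qed
  then obtain Wf where Wf: "\<forall>y. y < \<gamma> \<longrightarrow> (Wf y < \<gamma> \<and> y < Wf y \<and> (\<forall>i\<in>\<Theta>. \<exists>t\<in>C (q i). y \<le> t \<and> t < Wf y))"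
    by metis
  define s where "s n = (Wf ^^ n) a" for n
  have s_Suc: "s (Suc n) = Wf (s n)" for n by (simp add: s_def)
  have s_lt: "s n < \<gamma>" for n
  proof (induction n)
    case 0 show ?case by (simp add: s_def a)
  next
    case (Suc n) thus ?case using Wf s_Suc[of n] by simp
  qed
  have s_inc: "s n < s (Suc n)" for n using Wf s_lt[of n] s_Suc[of n] by simp
  have rs: "range s \<subseteq> {..<\<gamma>}" using s_lt by auto
  have rc: "|range s| \<le>o |\<Theta>|" by (rule countable_le[OF inf]) simp
  obtain w where w: "w < \<gamma>" "\<forall>n. s n < w" using good_bound[OF G rs rc] by auto
  define \<beta> where "\<beta> = ord_sup (range s)"
  have bnd: "\<forall>x\<in>range s. x \<le> w" using w by (auto intro: less_imp_le)
  have s_le: "s n \<le> \<beta>" for n unfolding \<beta>_def by (rule ord_sup_upper[OF bnd]) simp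
  have bw: "\<beta> \<le> w" unfolding \<beta>_def by (rule ord_sup_le[OF bnd])
  have bg: "\<beta> < \<gamma>" using bw w by simp
  have ab: "a \<le> \<beta>" using s_le[of 0] by (simp add: s_def)
  have "\<forall>i\<in>\<Theta>. \<beta> \<in> C (q i)"
  proof
    fix i assume i: "i \<in> \<Theta>"
    have T: "\<forall>n. \<exists>t\<in>C (q i). s n \<le> t \<and> t < s (Suc n)"
      using Wf s_lt s_Suc i by metis
    have sub: "\<forall>n. \<exists>t\<in>C (q i) \<inter> {..<\<beta>}. s n \<le> t"
    proof
      fix n
      obtain t where t: "t \<in> C (q i)" "s n \<le> t" "t < s (Suc n)" using T by blast
      have "t < \<beta>" using t(3) s_le[of "Suc n"] by simp
      thus "\<exists>t\<in>C (q i) \<inter> {..<\<beta>}. s n \<le> t" using t by auto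
    qed
    have ne: "C (q i) \<inter> {..<\<beta>} \<noteq> {}" using sub by blast
    have os: "ord_sup (C (q i) \<inter> {..<\<beta>}) = \<beta>"
    proof (rule ord_sup_eq)
      show "\<forall>x\<in>C (q i) \<inter> {..<\<beta>}. x \<le> \<beta>" by auto
      show "\<forall>v. (\<forall>x\<in>C (q i) \<inter> {..<\<beta>}. x \<le> v) \<longrightarrow> \<beta> \<le> v"
      proof (intro allI impI)
        fix v assume H: "\<forall>x\<in>C (q i) \<inter> {..<\<beta>}. x \<le> v"
        have "\<forall>x\<in>range s. x \<le> v"
        proof
          fix x assume "x \<in> range s"
          then obtain k where k: "x = s k" by blast
          obtain t where t: "t \<in> C (q i) \<inter> {..<\<beta>}" "s k \<le> t" using sub by blast
          have "t \<le> v" using H t(1) by blast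
          thus "x \<le> v" using k t(2) by (metis order.trans)
        qed
        thus "\<beta> \<le> v" unfolding \<beta>_def by (rule ord_sup_le)
      qed
    qed
    have "\<beta> < q i" using bg Q i by (meson less_le_trans)
    thus "\<beta> \<in> C (q i)" using Cseq_closed[OF CS, of "q i"] ne os unfolding closed_in_ord_def by blast
  qed
  thus ?thesis using ab bg by blast
qed



lemma small_insert:
  assumes R: "regular_uncountable TYPE('a::wellorder)" and "|S| <o |UNIV::'a set|"
  shows "|insert (a::'a) S| <o |UNIV::'a set|"
proof -
  have inf: "\<not> finite (UNIV::'a set)" using ru_unc[OF R] by (auto dest: countable_finite)
  have "|{a}| <o |UNIV::'a set|" using small_countable[OF R] by simp
  hence "|{a} \<union> S| <o |UNIV::'a set|" using card_of_Un_ordLess_infinite[OF inf _ assms(2)] by blast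
  thus ?thesis by simp
qed

lemma exists_good_closure:
  fixes bd :: "'a::wellorder \<Rightarrow> 'a \<Rightarrow> 'a" and \<Theta> :: "'b set"
  assumes R: "regular_uncountable TYPE('a)" and inf: "infinite \<Theta>"
    and B: "\<not> |{..<(\<epsilon>0::'a)}| \<le>o |\<Theta>|"
  shows "\<exists>\<gamma>. good \<Theta> \<gamma> \<and> (\<forall>\<mu> \<nu>. \<mu> < \<gamma> \<and> \<nu> < \<gamma> \<longrightarrow> bd \<mu> \<nu> < \<gamma>)"
proof -
  define K where "K = {\<gamma>. \<forall>\<mu> \<nu>. \<mu> < \<gamma> \<and> \<nu> < \<gamma> \<longrightarrow> bd \<mu> \<nu> < \<gamma>}"
  have F: "\<forall>a. \<exists>w. a < w \<and> (\<forall>\<mu> \<nu>. \<mu> < a \<and> \<nu> < a \<longrightarrow> bd \<mu> \<nu> < w)"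
  proof
    fix a :: 'a
    let ?S = "insert a ((\<lambda>(x, y). bd x y) ` ({..<a} \<times> {..<a}))"
    have "|(\<lambda>(x, y). bd x y) ` ({..<a} \<times> {..<a})| <o |UNIV::'a set|"
      using card_of_image small_times[OF R small_underS[OF R]] ordLeq_ordLess_trans by blast
    hence "|?S| <o |UNIV::'a set|" by (rule small_insert[OF R])
    then obtain w where w: "\<forall>s\<in>?S. s < w" using bounded_if_small[OF R] by blast
    show "\<exists>w. a < w \<and> (\<forall>\<mu> \<nu>. \<mu> < a \<and> \<nu> < a \<longrightarrow> bd \<mu> \<nu> < w)"
    proof (intro exI[of _ w] conjI allI impI)
      show "a < w" using w by simp
      fix \<mu> \<nu> assume "\<mu> < a \<and> \<nu> < a"
      hence "bd \<mu> \<nu> \<in> ?S" by (auto intro!: image_eqI[of _ _ "(\<mu>, \<nu>)"])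
      thus "bd \<mu> \<nu> < w" using w by blast
    qed
  qed
  then obtain Ff where Ff: "\<forall>a. a < Ff a \<and> (\<forall>\<mu> \<nu>. \<mu> < a \<and> \<nu> < a \<longrightarrow> bd \<mu> \<nu> < Ff a)"
    by metis
  have Kunb: "\<forall>x. \<exists>k\<in>K. x < k"
  proof
    fix x :: 'a
    obtain a where xa: "x < a" using ru_no_max[OF R] by blast
    define s where "s n = (Ff ^^ n) a" for n
    have s_Suc: "s (Suc n) = Ff (s n)" for n by (simp add: s_def)
    have s_inc: "s n \<le> s (Suc n)" for n using Ff s_Suc[of n] by (metis less_imp_le)
    have s_mono: "m \<le> n \<Longrightarrow> s m \<le> s n" for m n
      by (rule lift_Suc_mono_le[of s, OF s_inc])
    have "|range s| <o |UNIV::'a set|" by (rule small_countable[OF R]) simp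
    then obtain w where w: "\<forall>y\<in>range s. y < w" using bounded_if_small[OF R] by blast
    have bnd: "\<forall>y\<in>range s. y \<le> w" using w by (auto intro: less_imp_le)
    define \<beta> where "\<beta> = ord_sup (range s)"
    have s_le: "s n \<le> \<beta>" for n unfolding \<beta>_def by (rule ord_sup_upper[OF bnd]) simp
    have below: "y < \<beta> \<Longrightarrow> \<exists>n. y < s n" for y
    proof (rule ccontr)
      assume "y < \<beta>" "\<not> (\<exists>n. y < s n)"
      hence "\<forall>z\<in>range s. z \<le> y" by (auto simp: not_less)
      hence "\<beta> \<le> y" unfolding \<beta>_def by (rule ord_sup_le)
      thus False using \<open>y < \<beta>\<close> by simp
    qed
    have "\<beta> \<in> K" unfolding K_def
    proof (intro CollectI allI impI)
      fix \<mu> \<nu> assume H: "\<mu> < \<beta> \<and> \<nu> < \<beta>"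
      obtain n where n: "\<mu> < s n" using below H by blast
      obtain m where m: "\<nu> < s m" using below H by blast
      have "\<mu> < s (max n m)" using n s_mono[of n "max n m"] by simp
      moreover have "\<nu> < s (max n m)" using m s_mono[of m "max n m"] by simp
      ultimately have "bd \<mu> \<nu> < Ff (s (max n m))" using Ff by blast
      hence "bd \<mu> \<nu> < s (Suc (max n m))" using s_Suc by simp
      thus "bd \<mu> \<nu> < \<beta>" using s_le[of "Suc (max n m)"] by simp
    qed
    moreover have "x < \<beta>" using xa s_le[of 0] by (simp add: s_def)
    ultimately show "\<exists>k\<in>K. x < k" by blast
  qed
  have "cofinal K (ord_rel::'a rel)" unfolding cofinal_def
  proof
    fix x :: 'a assume "x \<in> Field ord_rel"
    obtain k where "k \<in> K" "x < k" using Kunb by blast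
    thus "\<exists>b\<in>K. x \<noteq> b \<and> (x, b) \<in> ord_rel" by (auto simp: ord_rel_def)
  qed
  hence "|K| =o (ord_rel::'a rel)" using ru_reg[OF R] unfolding regularCard_def by auto
  hence KU: "|K| =o |UNIV::'a set|" using ru_iso[OF R] ordIso_symmetric ordIso_transitive by blast
  have "|{..<\<epsilon>0}| \<le>o |K|"
    using card_of_mono1[of "{..<\<epsilon>0}" UNIV] KU ordIso_symmetric ordLeq_ordIso_trans by blast
  then obtain h where h: "inj_on h {..<\<epsilon>0}" "h ` {..<\<epsilon>0} \<subseteq> K"
    unfolding card_of_ordLeq[symmetric] by blast
  have K0iso: "|{..<\<epsilon>0}| =o |h ` {..<\<epsilon>0}|"
    using card_of_ordIsoI[OF inj_on_imp_bij_betw[OF h(1)]] .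
  hence "|h ` {..<\<epsilon>0}| <o |UNIV::'a set|"
    using small_underS[OF R] ordIso_symmetric ordIso_ordLess_trans by blast
  then obtain a where a: "\<forall>s\<in>h ` {..<\<epsilon>0}. s < a" using bounded_if_small[OF R] by blast
  have "h ` {..<\<epsilon>0} \<subseteq> K \<inter> {..<a}" using a h(2) by auto
  hence "|h ` {..<\<epsilon>0}| \<le>o |K \<inter> {..<a}|" by (rule card_of_mono1)
  hence "|{..<\<epsilon>0}| \<le>o |K \<inter> {..<a}|" using K0iso ordIso_ordLeq_trans by blast
  hence exa: "\<not> |K \<inter> {..<a}| \<le>o |\<Theta>|"
    using B ordLeq_transitive by blast
  define \<gamma> where "\<gamma> = (LEAST g. \<not> |K \<inter> {..<g}| \<le>o |\<Theta>| )"
  have g1: "\<not> |K \<inter> {..<\<gamma>}| \<le>o |\<Theta>|" unfolding \<gamma>_def by (rule LeastI[of _ a]) (rule exa)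
  have g2: "k < \<gamma> \<Longrightarrow> |K \<inter> {..<k}| \<le>o |\<Theta>|" for k unfolding \<gamma>_def using not_less_Least by blast
  have G: "good \<Theta> \<gamma>" unfolding good_def
  proof (intro allI impI)
    fix S :: "'a set" assume S: "S \<subseteq> {..<\<gamma>} \<and> |S| \<le>o |\<Theta>|"
    show "\<exists>w<\<gamma>. \<forall>s\<in>S. s < w"
    proof (rule ccontr)
      assume H: "\<not> (\<exists>w<\<gamma>. \<forall>s\<in>S. s < w)"
      have "K \<inter> {..<\<gamma>} \<subseteq> (\<Union>s\<in>S. insert s (K \<inter> {..<s}))"
      proof
        fix k assume k: "k \<in> K \<inter> {..<\<gamma>}"
        have kg: "k < \<gamma>" using k by simp
        have "\<not> (\<forall>s\<in>S. s < k)" using H kg by blast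
        hence "\<exists>s\<in>S. k \<le> s" by (simp add: not_less)
        then obtain s where s: "s \<in> S" "k \<le> s" by blast
        have "k = s \<or> k < s" using s(2) le_less by blast
        thus "k \<in> (\<Union>s\<in>S. insert s (K \<inter> {..<s}))" using k s(1) by blast
      qed
      moreover have "\<forall>s\<in>S. |insert s (K \<inter> {..<s})| \<le>o |\<Theta>|"
      proof
        fix s assume "s \<in> S"
        hence "s < \<gamma>" using S by auto
        hence "|K \<inter> {..<s}| \<le>o |\<Theta>|" by (rule g2)
        thus "|insert s (K \<inter> {..<s})| \<le>o |\<Theta>|" by (rule insert_le[OF inf])
      qed
      hence "|\<Union>s\<in>S. insert s (K \<inter> {..<s})| \<le>o |\<Theta>|"
        using card_of_UNION_ordLeq_infinite[OF inf, of S "\<lambda>s. insert s (K \<inter> {..<s})"] S by blast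
      ultimately have "|K \<inter> {..<\<gamma>}| \<le>o |\<Theta>|" by (rule ordLeq_transitive[OF card_of_mono1])
      thus False using g1 by blast
    qed
  qed
  have KG: "\<forall>w<\<gamma>. \<exists>k\<in>K. w \<le> k \<and> k < \<gamma>"
  proof (intro allI impI)
    fix w assume w: "w < \<gamma>"
    show "\<exists>k\<in>K. w \<le> k \<and> k < \<gamma>"
    proof (rule ccontr)
      assume H: "\<not> (\<exists>k\<in>K. w \<le> k \<and> k < \<gamma>)"
      have "K \<inter> {..<\<gamma>} \<subseteq> K \<inter> {..<w}" using H by (auto simp: not_le)
      hence "|K \<inter> {..<\<gamma>}| \<le>o |K \<inter> {..<w}|" by (rule card_of_mono1)
      thus False using g1 g2[OF w] by (meson ordLeq_transitive)
    qed
  qed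
  have L: "limit_pt \<gamma>" using good_limit[OF inf G] .
  have "\<forall>\<mu> \<nu>. \<mu> < \<gamma> \<and> \<nu> < \<gamma> \<longrightarrow> bd \<mu> \<nu> < \<gamma>"
  proof (intro allI impI)
    fix \<mu> \<nu> assume H: "\<mu> < \<gamma> \<and> \<nu> < \<gamma>"
    hence "max \<mu> \<nu> < \<gamma>" by simp
    then obtain w' where w': "max \<mu> \<nu> < w'" "w' < \<gamma>" using L unfolding limit_pt_def by blast
    then obtain k where k: "k \<in> K" "w' \<le> k" "k < \<gamma>" using KG by blast
    have "\<mu> < k" "\<nu> < k" using w' k by auto
    hence "bd \<mu> \<nu> < k" using k(1) unfolding K_def by blast
    thus "bd \<mu> \<nu> < \<gamma>" using k(3) by simp
  qed
  thus ?thesis using G by blast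
qed



lemma chi_from_cover:
  fixes C :: "'a::wellorder \<Rightarrow> 'a set" and \<Theta> :: "'b set" and \<Gamma> :: "'a set"
  assumes inf: "infinite \<Theta>" and U: "\<forall>a. \<exists>g\<in>\<Gamma>. a \<le> g"
    and Cov: "\<forall>\<epsilon>. \<exists>\<Delta>::'a set. |\<Delta>| \<le>o |\<Theta>| \<and> \<Gamma> \<inter> {..<\<epsilon>} \<subseteq> (\<Union>\<delta>\<in>\<Delta>. C \<delta>)"
  shows "\<not> less_chi \<Theta> C"
proof (cases "|\<Theta>| \<le>o |UNIV::'a set|")
  case True
  then obtain g :: "'b \<Rightarrow> 'a" where g: "inj_on g \<Theta>" unfolding card_of_ordLeq[symmetric] by blast
  define B0 where "B0 = g ` \<Theta>"
  have iso: "|\<Theta>| =o |B0|" unfolding B0_def by (rule card_of_ordIsoI[OF inj_on_imp_bij_betw[OF g]])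
  have B0le: "|B0| \<le>o |\<Theta>|" using iso ordIso_symmetric ordIso_imp_ordLeq by blast
  have "chi_property C B0" unfolding chi_property_def
  proof (rule exI[of _ \<Gamma>], intro conjI allI)
    show "\<And>a. \<exists>g\<in>\<Gamma>. a \<le> g" using U by blast
    fix \<epsilon> :: 'a
    obtain \<Delta> :: "'a set" where D: "|\<Delta>| \<le>o |\<Theta>|" "\<Gamma> \<inter> {..<\<epsilon>} \<subseteq> (\<Union>\<delta>\<in>\<Delta>. C \<delta>)" using Cov by blast
    have 1: "|\<Delta> \<union> B0| \<le>o |\<Theta>|" by (rule un_le[OF inf D(1) B0le])
    have 2: "|\<Delta> \<union> B0| \<le>o |B0|" by (rule ordLeq_ordIso_trans[OF 1 iso])
    have 3: "|B0| \<le>o |\<Delta> \<union> B0|" by (rule card_of_mono1) blast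
    have "|\<Delta> \<union> B0| =o |B0|" using 2 3 by (simp add: ordIso_iff_ordLeq)
    moreover have "\<Gamma> \<inter> {..<\<epsilon>} \<subseteq> (\<Union>\<delta>\<in>\<Delta> \<union> B0. C \<delta>)" using D(2) by blast
    ultimately show "\<exists>\<Delta>::'a set. |\<Delta>| =o |B0| \<and> \<Gamma> \<inter> {..<\<epsilon>} \<subseteq> (\<Union>\<delta>\<in>\<Delta>. C \<delta>)" by blast
  qed
  thus ?thesis using B0le unfolding less_chi_def by (meson)
next
  case False
  hence "|UNIV::'a set| <o |\<Theta>|" using not_ordLeq_iff_ordLess[OF card_of_Well_order card_of_Well_order] by blast
  hence Ule: "|UNIV::'a set| \<le>o |\<Theta>|" by (rule ordLess_imp_ordLeq)
  have "chi_property C (UNIV::'a set)" unfolding chi_property_def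
  proof (rule exI[of _ \<Gamma>], intro conjI allI)
    show "\<And>a. \<exists>g\<in>\<Gamma>. a \<le> g" using U by blast
    fix \<epsilon> :: 'a
    obtain \<Delta> :: "'a set" where D: "|\<Delta>| \<le>o |\<Theta>|" "\<Gamma> \<inter> {..<\<epsilon>} \<subseteq> (\<Union>\<delta>\<in>\<Delta>. C \<delta>)" using Cov by blast
    have "\<Gamma> \<inter> {..<\<epsilon>} \<subseteq> (\<Union>\<delta>\<in>UNIV. C \<delta>)" using D(2) by blast
    thus "\<exists>\<Delta>::'a set. |\<Delta>| =o |UNIV::'a set| \<and> \<Gamma> \<inter> {..<\<epsilon>} \<subseteq> (\<Union>\<delta>\<in>\<Delta>. C \<delta>)"
      using card_of_refl by blast
  qed
  thus ?thesis using Ule unfolding less_chi_def by (meson)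
qed

lemma in_C_succ:
  assumes R: "regular_uncountable TYPE('a::wellorder)" and CS: "C_sequence C" and x: "bt < (x::'a)"
  shows "x \<in> C (LEAST w. x < w)"
proof -
  define y where "y = (LEAST w. x < w)"
  have xy: "x < y" unfolding y_def using ru_no_max[OF R] by (metis LeastI)
  have below: "z < y \<Longrightarrow> z \<le> x" for z
  proof (rule ccontr)
    assume "z < y" "\<not> z \<le> x"
    hence "x < z" by simp
    hence "y \<le> z" unfolding y_def by (rule Least_le)
    thus False using \<open>z < y\<close> by simp
  qed
  have os: "ord_sup {..<y} = x"
  proof (rule ord_sup_eq)
    show "\<forall>z\<in>{..<y}. z \<le> x" using below by auto
    show "\<forall>v. (\<forall>z\<in>{..<y}. z \<le> v) \<longrightarrow> x \<le> v" using xy by auto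
  qed
  show ?thesis
  proof (rule ccontr)
    assume H: "x \<notin> C (LEAST w. x < w)"
    hence H': "x \<notin> C y" unfolding y_def .
    have lt: "\<forall>z\<in>C y. z < x" using Cseq_sub[OF CS, of y] below H' by (force simp: le_less)
    have eq: "ord_sup (C y) = x" using Cseq_sup[OF CS, of y] os by simp
    show False
    proof (cases "C y = {}")
      case True thus False using eq ord_sup_empty x by (metis less_irrefl)
    next
      case False
      have "C y \<inter> {..<x} = C y" using lt by auto
      hence "x \<in> C y" using Cseq_closed[OF CS, of y] False eq xy unfolding closed_in_ord_def by auto
      thus False using H' by simp
    qed
  qed
qed

lemma caseA:
  fixes C :: "'a::wellorder \<Rightarrow> 'a set" and \<Theta> :: "'b set"
  assumes R: "regular_uncountable TYPE('a)" and CS: "C_sequence C" and inf: "infinite \<Theta>"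
    and A: "\<forall>\<epsilon>::'a. |{..<\<epsilon>}| \<le>o |\<Theta>|"
  shows "\<not> less_chi \<Theta> C"
proof -
  have U: "\<forall>a::'a. \<exists>g\<in>{x::'a. bt < x}. a \<le> g"
  proof (rule allI)
    fix a :: 'a
    obtain b where "a < b" using ru_no_max[OF R] by blast
    have "bt < b" using \<open>a < b\<close> bt_le[of a] by (metis le_less_trans)
    thus "\<exists>g\<in>{x. bt < x}. a \<le> g" using \<open>a < b\<close> by auto
  qed
  have Cov: "\<forall>\<epsilon>::'a. \<exists>\<Delta>::'a set. |\<Delta>| \<le>o |\<Theta>| \<and> {x::'a. bt < x} \<inter> {..<\<epsilon>} \<subseteq> (\<Union>\<delta>\<in>\<Delta>. C \<delta>)"
  proof
    fix \<epsilon> :: 'a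
    let ?D = "(\<lambda>x. LEAST w. x < w) ` {..<\<epsilon>}"
    have "|?D| \<le>o |\<Theta>|" using ordLeq_transitive[OF card_of_image A[rule_format, of \<epsilon>]] .
    moreover have "{x. bt < x} \<inter> {..<\<epsilon>} \<subseteq> (\<Union>\<delta>\<in>?D. C \<delta>)"
    proof
      fix x assume x: "x \<in> {x. bt < x} \<inter> {..<\<epsilon>}"
      hence "x \<in> C (LEAST w. x < w)" using in_C_succ[OF R CS] by simp
      moreover have "(LEAST w. x < w) \<in> ?D" using x by simp
      ultimately show "x \<in> (\<Union>\<delta>\<in>?D. C \<delta>)" by (rule UN_I[rotated])
    qed
    ultimately show "\<exists>\<Delta>::'a set. |\<Delta>| \<le>o |\<Theta>| \<and> {x. bt < x} \<inter> {..<\<epsilon>} \<subseteq> (\<Union>\<delta>\<in>\<Delta>. C \<delta>)"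
      by blast
  qed
  show ?thesis by (rule chi_from_cover[OF inf U Cov])
qed

lemma compare:
  assumes S1: "SF C \<gamma>1 \<delta>1 b1 c1 q1" and S2: "SF C \<gamma>2 \<delta>2 b2 c2 q2"
    and l: "l \<le> \<gamma>1" "l \<le> \<gamma>2" and bm: "b1 \<le> m" "b2 \<le> m"
    and t1: "t1 \<in> C q1" "m \<le> t1" "t1 < l" and t2: "t2 \<in> C q2" "m \<le> t2" "t2 < l"
    and ag: "\<forall>y<l. rho2 C y \<delta>1 = rho2 C y \<delta>2"
    and x: "m \<le> x" "x < l" "x \<in> C q1"
  shows "x \<in> C q2"
proof -
  have F1: "\<forall>x. b1 \<le> x \<and> x < \<gamma>1 \<longrightarrow> c1 \<le> rho2 C x \<delta>1 \<and> (rho2 C x \<delta>1 = c1 \<longleftrightarrow> x \<in> C q1)"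
    using S1 unfolding SF_def by blast
  have F2: "\<forall>x. b2 \<le> x \<and> x < \<gamma>2 \<longrightarrow> c2 \<le> rho2 C x \<delta>2 \<and> (rho2 C x \<delta>2 = c2 \<longleftrightarrow> x \<in> C q2)"
    using S2 unfolding SF_def by blast
  have a1: "b1 \<le> t1 \<and> t1 < \<gamma>1" "b2 \<le> t1 \<and> t1 < \<gamma>2" using t1 bm l by auto
  have a2: "b1 \<le> t2 \<and> t2 < \<gamma>1" "b2 \<le> t2 \<and> t2 < \<gamma>2" using t2 bm l by auto
  have "rho2 C t1 \<delta>1 = c1" using F1 a1(1) t1(1) by blast
  moreover have "c2 \<le> rho2 C t1 \<delta>2" using F2 a1(2) by blast
  moreover have "rho2 C t1 \<delta>1 = rho2 C t1 \<delta>2" using ag t1(3) by blast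
  ultimately have c21: "c2 \<le> c1" by simp
  have "rho2 C t2 \<delta>2 = c2" using F2 a2(2) t2(1) by blast
  moreover have "c1 \<le> rho2 C t2 \<delta>1" using F1 a2(1) by blast
  moreover have "rho2 C t2 \<delta>1 = rho2 C t2 \<delta>2" using ag t2(3) by blast
  ultimately have c12: "c1 \<le> c2" by simp
  have ax: "b1 \<le> x \<and> x < \<gamma>1" "b2 \<le> x \<and> x < \<gamma>2" using x bm l by auto
  have "rho2 C x \<delta>1 = c1" using F1 ax(1) x(3) by blast
  hence "rho2 C x \<delta>2 = c2" using ag x(2) c21 c12 by simp
  thus ?thesis using F2 ax(2) by blast
qed

lemma agree:
  assumes "f1 = rho2_restr C d1 g1" "f2 = rho2_restr C d2 g2" "g1 \<le> g2" "f1 \<subseteq>\<^sub>m f2"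
  shows "\<forall>y<g1. rho2 C y d1 = rho2 C y d2"
proof (intro allI impI)
  fix y assume y: "y < g1"
  hence "y \<in> dom f1" using assms(1) by (simp add: rho2_restr_def dom_def)
  hence "f1 y = f2 y" using assms(4) unfolding map_le_def by blast
  moreover have "y < g2" using y assms(3) by simp
  ultimately show "rho2 C y d1 = rho2 C y d2" using assms y by (simp add: rho2_restr_def)
qed



theorem lemma7p9:
  fixes C :: "'a::wellorder \<Rightarrow> 'a set" and \<Theta> :: "'b set"
  assumes "regular_uncountable TYPE('a)"
    and "C_sequence C"
    and "infinite \<Theta>"
    and "less_chi \<Theta> C"
  shows "\<not> (\<exists>f. ascending_path C \<Theta> f)"
proof
  note R = assms(1) and CS = assms(2) and inf = assms(3) and LC = assms(4)
  assume "\<exists>f. ascending_path C \<Theta> f"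
  then obtain f where AP: "ascending_path C \<Theta> f" by blast
  have AP1: "\<forall>\<gamma>. \<forall>i\<in>\<Theta>. f \<gamma> i \<in> T_level C \<gamma>" using AP unfolding ascending_path_def by blast
  have AP2: "\<forall>\<gamma> \<delta>. \<gamma> < \<delta> \<longrightarrow> (\<exists>i\<in>\<Theta>. \<exists>j\<in>\<Theta>. f \<gamma> i \<subseteq>\<^sub>m f \<delta> j)"
    using AP unfolding ascending_path_def by blast
  obtain i0 where i0: "i0 \<in> \<Theta>" using inf by (metis finite.emptyI ex_in_conv)
  have "\<forall>\<gamma> i. \<exists>d. i \<in> \<Theta> \<longrightarrow> \<gamma> \<le> d \<and> f \<gamma> i = rho2_restr C d \<gamma>"
    using AP1 unfolding T_level_def by blast
  then obtain df where df: "\<forall>\<gamma> i. i \<in> \<Theta> \<longrightarrow> \<gamma> \<le> df \<gamma> i \<and> f \<gamma> i = rho2_restr C (df \<gamma> i) \<gamma>"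
    by metis
  show False
  proof (cases "\<forall>\<epsilon>::'a. |{..<\<epsilon>}| \<le>o |\<Theta>|")
    case True
    thus False using caseA[OF R CS inf] LC by blast
  next
    case False
    then obtain \<epsilon>0 :: 'a where B: "\<not> |{..<\<epsilon>0}| \<le>o |\<Theta>|" by blast
    have "\<forall>\<gamma> i. \<exists>t. good \<Theta> \<gamma> \<and> i \<in> \<Theta> \<longrightarrow> SF C \<gamma> (df \<gamma> i) (fst t) (fst (snd t)) (snd (snd t))"
    proof (intro allI impI)
      fix \<gamma> :: 'a and i
      show "\<exists>t. good \<Theta> \<gamma> \<and> i \<in> \<Theta> \<longrightarrow> SF C \<gamma> (df \<gamma> i) (fst t) (fst (snd t)) (snd (snd t))"
      proof (cases "good \<Theta> \<gamma> \<and> i \<in> \<Theta>")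
        case True
        hence "limit_pt \<gamma>" "\<gamma> \<le> df \<gamma> i" using good_limit[OF inf] df by auto
        then obtain b c q where "SF C \<gamma> (df \<gamma> i) b c q" using simple_form[OF CS] by blast
        thus ?thesis by (intro exI[of _ "(b, c, q)"]) simp
      next
        case False thus ?thesis by blast
      qed
    qed
    then obtain tt where tt: "\<forall>\<gamma> i. good \<Theta> \<gamma> \<and> i \<in> \<Theta> \<longrightarrow> SF C \<gamma> (df \<gamma> i) (fst (tt \<gamma> i)) (fst (snd (tt \<gamma> i))) (snd (snd (tt \<gamma> i)))"
      by metis
    define bb where "bb \<gamma> i = fst (tt \<gamma> i)" for \<gamma> i
    define cc where "cc \<gamma> i = fst (snd (tt \<gamma> i))" for \<gamma> i
    define qq where "qq \<gamma> i = snd (snd (tt \<gamma> i))" for \<gamma> i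
    have SFg: "good \<Theta> \<gamma> \<Longrightarrow> i \<in> \<Theta> \<Longrightarrow> SF C \<gamma> (df \<gamma> i) (bb \<gamma> i) (cc \<gamma> i) (qq \<gamma> i)" for \<gamma> i
      using tt unfolding bb_def cc_def qq_def by blast
    have "\<forall>\<gamma>. \<exists>w. good \<Theta> \<gamma> \<longrightarrow> w < \<gamma> \<and> (\<forall>i\<in>\<Theta>. bb \<gamma> i < w)"
    proof
      fix \<gamma> :: 'a
      show "\<exists>w. good \<Theta> \<gamma> \<longrightarrow> w < \<gamma> \<and> (\<forall>i\<in>\<Theta>. bb \<gamma> i < w)"
      proof (cases "good \<Theta> \<gamma>")
        case True
        have "bb \<gamma> ` \<Theta> \<subseteq> {..<\<gamma>}" using SFg[OF True] unfolding SF_def by auto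
        then obtain w where "w < \<gamma>" "\<forall>s\<in>bb \<gamma> ` \<Theta>. s < w"
          using good_bound[OF True _ card_of_image] by blast
        thus ?thesis by auto
      next
        case False thus ?thesis by blast
      qed
    qed
    then obtain mu where mu: "\<forall>\<gamma>. good \<Theta> \<gamma> \<longrightarrow> mu \<gamma> < \<gamma> \<and> (\<forall>i\<in>\<Theta>. bb \<gamma> i < mu \<gamma>)"
      by metis
    define E where "E m n = {\<gamma>. good \<Theta> \<gamma> \<and> mu \<gamma> \<le> m \<and> n < \<gamma> \<and> (\<forall>i\<in>\<Theta>. \<exists>t\<in>C (qq \<gamma> i). m \<le> t \<and> t < n)}"
      for m n
    have "\<exists>m n. \<forall>a. \<exists>\<gamma>\<in>E m n. a \<le> \<gamma>"
    proof (rule ccontr)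
      assume H: "\<not> (\<exists>m n. \<forall>a. \<exists>\<gamma>\<in>E m n. a \<le> \<gamma>)"
      hence "\<forall>m n. \<exists>a. \<forall>\<gamma>\<in>E m n. \<gamma> < a" by (auto simp: not_le)
      then obtain bd where bd: "\<forall>m n. \<forall>\<gamma>\<in>E m n. \<gamma> < bd m n" by metis
      obtain \<gamma> where G: "good \<Theta> \<gamma>" and cl: "\<forall>\<mu> \<nu>. \<mu> < \<gamma> \<and> \<nu> < \<gamma> \<longrightarrow> bd \<mu> \<nu> < \<gamma>"
        using exists_good_closure[OF R inf B, of bd] by blast
      define m where "m = mu \<gamma>"
      have mg: "m < \<gamma>" using mu G unfolding m_def by blast
      have "\<forall>i. \<exists>t. i \<in> \<Theta> \<longrightarrow> t \<in> C (qq \<gamma> i) \<and> m \<le> t \<and> t < \<gamma>"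
        using SFg[OF G] mg unfolding SF_def unbdd_in_def by blast
      then obtain tf where tf: "\<forall>i. i \<in> \<Theta> \<longrightarrow> tf i \<in> C (qq \<gamma> i) \<and> m \<le> tf i \<and> tf i < \<gamma>"
        by metis
      have "tf ` \<Theta> \<subseteq> {..<\<gamma>}" using tf by auto
      then obtain n where n: "n < \<gamma>" "\<forall>s\<in>tf ` \<Theta>. s < n"
        using good_bound[OF G _ card_of_image] by blast
      have "\<gamma> \<in> E m n" unfolding E_def m_def
      proof (intro CollectI conjI ballI)
        show "good \<Theta> \<gamma>" "mu \<gamma> \<le> mu \<gamma>" "n < \<gamma>" using G n by auto
        fix i assume "i \<in> \<Theta>"
        thus "\<exists>t\<in>C (qq \<gamma> i). mu \<gamma> \<le> t \<and> t < n" using tf n unfolding m_def by blast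
      qed
      hence "\<gamma> < bd m n" using bd by blast
      moreover have "bd m n < \<gamma>" using cl mg n by blast
      ultimately show False by simp
    qed
    then obtain m n where Eunb: "\<forall>a. \<exists>\<gamma>\<in>E m n. a \<le> \<gamma>" by blast
    have Einfo: "good \<Theta> \<gamma> \<and> mu \<gamma> \<le> m \<and> n < \<gamma> \<and> (\<forall>i\<in>\<Theta>. \<exists>t\<in>C (qq \<gamma> i). m \<le> t \<and> t < n)"
      if "\<gamma> \<in> E m n" for \<gamma> using that unfolding E_def by blast
    have mn: "m < n"
    proof -
      obtain \<gamma> where "\<gamma> \<in> E m n" using Eunb by blast
      then obtain t where "m \<le> t" "t < n" using Einfo i0 by blast
      thus ?thesis by simp
    qed
    define \<Gamma> where "\<Gamma> = {x. \<exists>\<gamma>\<in>E m n. m \<le> x \<and> x < \<gamma> \<and> (\<forall>i\<in>\<Theta>. x \<in> C (qq \<gamma> i))}"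
    have U: "\<forall>a. \<exists>g\<in>\<Gamma>. a \<le> g"
    proof
      fix a :: 'a
      obtain a' where "a < a'" using ru_no_max[OF R] by blast
      then obtain \<gamma> where g: "\<gamma> \<in> E m n" "a' \<le> \<gamma>" using Eunb by blast
      have I: "good \<Theta> \<gamma>" "n < \<gamma>" using Einfo[OF g(1)] by auto
      have Q: "\<forall>i\<in>\<Theta>. \<gamma> \<le> qq \<gamma> i \<and> unbdd_in (C (qq \<gamma> i)) \<gamma>"
        using SFg[OF I(1)] unfolding SF_def by blast
      have "max a m < \<gamma>" using \<open>a < a'\<close> g(2) I(2) mn by (auto simp: max_def)
      then obtain x where x: "max a m \<le> x" "x < \<gamma>" "\<forall>i\<in>\<Theta>. x \<in> C (qq \<gamma> i)"
        using club_inter[OF CS inf I(1) Q] by blast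
      have "x \<in> \<Gamma>" unfolding \<Gamma>_def using g(1) x by auto
      thus "\<exists>g\<in>\<Gamma>. a \<le> g" using x(1) by (intro bexI[of _ x]) auto
    qed
    have key: "\<exists>j\<in>\<Theta>. x \<in> C (qq \<eta> j)"
      if \<eta>: "\<eta> \<in> E m n" and \<gamma>: "\<gamma> \<in> E m n" and x: "m \<le> x" "x < \<gamma>" "x < \<eta>" "\<forall>i\<in>\<Theta>. x \<in> C (qq \<gamma> i)"
      for x \<gamma> \<eta>
    proof -
      have Ie: "good \<Theta> \<eta>" "mu \<eta> \<le> m" "n < \<eta>" "\<forall>i\<in>\<Theta>. \<exists>t\<in>C (qq \<eta> i). m \<le> t \<and> t < n"
        using Einfo[OF \<eta>] by auto
      have Ig: "good \<Theta> \<gamma>" "mu \<gamma> \<le> m" "n < \<gamma>" "\<forall>i\<in>\<Theta>. \<exists>t\<in>C (qq \<gamma> i). m \<le> t \<and> t < n"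
        using Einfo[OF \<gamma>] by auto
      have bbe: "j \<in> \<Theta> \<Longrightarrow> bb \<eta> j \<le> m" for j using mu Ie(1,2) by (meson less_imp_le order.trans)
      have bbg: "i \<in> \<Theta> \<Longrightarrow> bb \<gamma> i \<le> m" for i using mu Ig(1,2) by (meson less_imp_le order.trans)
      show ?thesis
      proof (cases "\<gamma> = \<eta>")
        case True thus ?thesis using x(4) i0 by blast
      next
        case False
        show ?thesis
        proof (cases "\<gamma> < \<eta>")
          case True
          then obtain i j where ij: "i \<in> \<Theta>" "j \<in> \<Theta>" "f \<gamma> i \<subseteq>\<^sub>m f \<eta> j" using AP2 by blast
          have ag: "\<forall>y<\<gamma>. rho2 C y (df \<gamma> i) = rho2 C y (df \<eta> j)"
            using agree[of "f \<gamma> i" C "df \<gamma> i" \<gamma> "f \<eta> j" "df \<eta> j" \<eta>] df ij True by auto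
          obtain t1 where t1: "t1 \<in> C (qq \<gamma> i)" "m \<le> t1" "t1 < n" using Ig(4) ij(1) by blast
          obtain t2 where t2: "t2 \<in> C (qq \<eta> j)" "m \<le> t2" "t2 < n" using Ie(4) ij(2) by blast
          have "x \<in> C (qq \<eta> j)"
            by (rule compare[OF SFg[OF Ig(1) ij(1)] SFg[OF Ie(1) ij(2)] order.refl less_imp_le[OF True]
                 bbg[OF ij(1)] bbe[OF ij(2)] t1(1,2) less_trans[OF t1(3) Ig(3)] t2(1,2) less_trans[OF t2(3) Ig(3)]
                 ag x(1,2) bspec[OF x(4) ij(1)]])
          thus ?thesis using ij(2) by blast
        next
          case False
          hence lt: "\<eta> < \<gamma>" using \<open>\<gamma> \<noteq> \<eta>\<close> by simp
          then obtain j i where ij: "j \<in> \<Theta>" "i \<in> \<Theta>" "f \<eta> j \<subseteq>\<^sub>m f \<gamma> i" using AP2 by blast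
          have ag: "\<forall>y<\<eta>. rho2 C y (df \<eta> j) = rho2 C y (df \<gamma> i)"
            using agree[of "f \<eta> j" C "df \<eta> j" \<eta> "f \<gamma> i" "df \<gamma> i" \<gamma>] df ij lt by auto
          obtain t1 where t1: "t1 \<in> C (qq \<gamma> i)" "m \<le> t1" "t1 < n" using Ig(4) ij(2) by blast
          obtain t2 where t2: "t2 \<in> C (qq \<eta> j)" "m \<le> t2" "t2 < n" using Ie(4) ij(1) by blast
          have ag': "\<forall>y<\<eta>. rho2 C y (df \<gamma> i) = rho2 C y (df \<eta> j)" using ag by simp
          have "x \<in> C (qq \<eta> j)"
            by (rule compare[OF SFg[OF Ig(1) ij(2)] SFg[OF Ie(1) ij(1)] less_imp_le[OF lt] order.refl
                 bbg[OF ij(2)] bbe[OF ij(1)] t1(1,2) less_trans[OF t1(3) Ie(3)] t2(1,2) less_trans[OF t2(3) Ie(3)]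
                 ag' x(1,3) bspec[OF x(4) ij(2)]])
          thus ?thesis using ij(1) by blast
        qed
      qed
    qed
    have Cov: "\<forall>\<epsilon>. \<exists>\<Delta>::'a set. |\<Delta>| \<le>o |\<Theta>| \<and> \<Gamma> \<inter> {..<\<epsilon>} \<subseteq> (\<Union>\<delta>\<in>\<Delta>. C \<delta>)"
    proof
      fix \<epsilon> :: 'a
      obtain \<eta> where \<eta>: "\<eta> \<in> E m n" "\<epsilon> \<le> \<eta>" using Eunb by blast
      have "\<Gamma> \<inter> {..<\<epsilon>} \<subseteq> (\<Union>\<delta>\<in>qq \<eta> ` \<Theta>. C \<delta>)"
      proof
        fix x assume "x \<in> \<Gamma> \<inter> {..<\<epsilon>}"
        then obtain \<gamma> where g: "\<gamma> \<in> E m n" "m \<le> x" "x < \<gamma>" "\<forall>i\<in>\<Theta>. x \<in> C (qq \<gamma> i)" "x < \<epsilon>"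
          unfolding \<Gamma>_def by blast
        have "x < \<eta>" using g(5) \<eta>(2) by simp
        then obtain j where "j \<in> \<Theta>" "x \<in> C (qq \<eta> j)" using key[OF \<eta>(1) g(1) g(2) g(3) _ g(4)] by blast
        thus "x \<in> (\<Union>\<delta>\<in>qq \<eta> ` \<Theta>. C \<delta>)" by blast
      qed
      thus "\<exists>\<Delta>::'a set. |\<Delta>| \<le>o |\<Theta>| \<and> \<Gamma> \<inter> {..<\<epsilon>} \<subseteq> (\<Union>\<delta>\<in>\<Delta>. C \<delta>)"
        using card_of_image[of "qq \<eta>" \<Theta>] by blast
    qed
    show False using chi_from_cover[OF inf U Cov] LC by blast
  qed
qed

end
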